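(* Let $(X,Y)$ be a pair of real random variables whose marginal distributions are light-tailed. Then there exists a coupling of $(X,Y)$ with a pair $(\xi,\eta)$ of i.i.d. random variables whose common distribution is light-tailed, such that $$\max(X,Y)\le\min(\xi,\eta)\quad\text{a.s.}$$
   Context: A real random variable $Z$ (or its distribution) is light-tailed if $\mathbf E\,e^{cZ}<\infty$ for some constant $c>0$. *)

theory Defs
  imports "HOL-Probability.Probability"
begin

definition light_tailed :: "real measure \<Rightarrow> bool" where
  "light_tailed \<mu> \<longleftrightarrow> (\<exists>c>0. (\<integral>\<^sup>+ x. ennreal (exp (c * x)) \<partial>\<mu>) < \<infinity>)"

end

theory Submission
  imports Defs
begin
lemma tele_nn:
  fixes g :: "nat \<Rightarrow> real"
  assumes mono: "\<And>k. g (Suc k) \<le> g k" and g0: "g 0 = 1" and lim: "g \<longlonglongrightarrow> 0"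
  shows "(\<integral>\<^sup>+k. ennreal (g k - g (Suc k)) \<partial>count_space UNIV) = 1"
proof -
  have "(\<lambda>k. g k - g (Suc k)) sums (g 0 - 0)" by (rule telescope_sums'[OF lim])
  then show ?thesis
    by (simp add: nn_integral_count_space_nat suminf_ennreal_eq mono g0) (metis sums_unique)
qed

definition tpmf :: "(nat \<Rightarrow> real) \<Rightarrow> nat pmf" where
  "tpmf g = embed_pmf (\<lambda>k. g k - g (Suc k))"

lemma
  fixes g :: "nat \<Rightarrow> real"
  assumes mono: "\<And>k. g (Suc k) \<le> g k" and g0: "g 0 = 1" and lim: "g \<longlonglongrightarrow> 0"
  shows pmf_tpmf: "pmf (tpmf g) k = g k - g (Suc k)"
    and tail_tpmf: "measure_pmf.prob (tpmf g) {k..} = g k"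
proof -
  show p: "pmf (tpmf g) k = g k - g (Suc k)" for k
    unfolding tpmf_def by (subst pmf_embed_pmf) (use tele_nn[OF assms] mono in auto)
  have "measure_pmf.prob (tpmf g) {..<k} = (\<Sum>j<k. g j - g (Suc j))"
    by (simp add: measure_measure_pmf_finite p)
  also have "\<dots> = g 0 - g k" by (rule sum_lessThan_telescope')
  finally have "measure_pmf.prob (tpmf g) {..<k} = 1 - g k" using g0 by simp
  moreover have "{k..} = UNIV - {..<k}" by auto
  ultimately show "measure_pmf.prob (tpmf g) {k..} = g k"
    using measure_pmf.prob_compl[of "{..<k}" "tpmf g"] by simp
qed

lemma sqrt_exp: "sqrt (exp a) = exp (a/2)"
proof -
  have "exp a = (exp (a/2))^2" by (simp add: power2_eq_square flip: exp_add)
  then show ?thesis by simp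
qed

lemma pair_pmf_rect:
  "measure_pmf.prob (pair_pmf A B) (S \<times> S') = measure_pmf.prob A S * measure_pmf.prob B S'"
proof -
  have "emeasure (pair_pmf A B) (S \<times> S') = (\<integral>\<^sup>+x. indicator (S \<times> S') x \<partial>pair_pmf A B)" by simp
  also have "\<dots> = (\<integral>\<^sup>+a. \<integral>\<^sup>+b. indicator S a * indicator S' b \<partial>B \<partial>A)"
    by (simp add: nn_integral_pair_pmf' indicator_times)
  also have "\<dots> = (\<integral>\<^sup>+a. indicator S a * emeasure B S' \<partial>A)"
    by (simp add: nn_integral_cmult)
  also have "\<dots> = emeasure A S * emeasure B S'"
    by (simp add: nn_integral_multc)
  finally show ?thesis
    by (simp add: measure_pmf.emeasure_eq_measure flip: ennreal_mult)
qed

locale cpl = prob_space M for M :: "'a measure" +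
  fixes X Y :: "'a \<Rightarrow> real"
  assumes Xm[measurable]: "X \<in> borel_measurable M" and Ym[measurable]: "Y \<in> borel_measurable M"
begin
definition K :: "'a \<Rightarrow> nat" where "K \<omega> = nat \<lceil>max (X \<omega>) (Y \<omega>)\<rceil>"
lemma K_meas[measurable]: "K \<in> M \<rightarrow>\<^sub>M count_space UNIV"
  unfolding K_def by measurable
definition T :: "nat \<Rightarrow> real" where "T k = prob {\<omega>\<in>space M. k \<le> K \<omega>}"
lemma T0: "T 0 = 1" unfolding T_def by (simp add: prob_space)
lemma T_nonneg: "0 \<le> T k" by (simp add: T_def)
lemma T_mono: "T (Suc k) \<le> T k" unfolding T_def
  by (intro finite_measure_mono) auto
lemma T_diff: "prob {\<omega>\<in>space M. K \<omega> = k} = T k - T (Suc k)"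
proof -
  have "{\<omega>\<in>space M. k \<le> K \<omega>} = {\<omega>\<in>space M. K \<omega> = k} \<union> {\<omega>\<in>space M. Suc k \<le> K \<omega>}" by auto
  moreover have "prob ({\<omega>\<in>space M. K \<omega> = k} \<union> {\<omega>\<in>space M. Suc k \<le> K \<omega>}) = prob {\<omega>\<in>space M. K \<omega> = k} + prob {\<omega>\<in>space M. Suc k \<le> K \<omega>}"
    by (intro finite_measure_Union) auto
  ultimately show ?thesis unfolding T_def by simp
qed
lemma T_lim: "T \<longlonglongrightarrow> 0"
proof -
  have "(\<lambda>k. prob {\<omega>\<in>space M. k \<le> K \<omega>}) \<longlonglongrightarrow> prob (\<Inter>k. {\<omega>\<in>space M. k \<le> K \<omega>})"
    by (intro finite_Lim_measure_decseq) (auto simp: decseq_def)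
  moreover have "(\<Inter>k. {\<omega>\<in>space M. k \<le> K \<omega>}) = {}"
    by auto (meson Suc_n_not_le_n)
  ultimately show ?thesis unfolding T_def by simp
qed

definition S :: "nat \<Rightarrow> real" where "S k = sqrt (T k)"
lemma S0: "S 0 = 1" by (simp add: S_def T0)
lemma S_mono: "S (Suc k) \<le> S k" by (simp add: S_def T_mono)
lemma S_lim: "S \<longlonglongrightarrow> 0"
  unfolding S_def using tendsto_real_sqrt[OF T_lim] by simp

definition pK :: "nat pmf" where "pK = tpmf T"
definition \<nu> :: "nat pmf" where "\<nu> = tpmf S"
definition Q :: "(nat \<times> nat) pmf" where "Q = pair_pmf \<nu> \<nu>"

lemma pmf_pK: "pmf pK k = T k - T (Suc k)"
  unfolding pK_def by (rule pmf_tpmf[OF T_mono T0 T_lim])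
lemma pmf_nu: "pmf \<nu> k = S k - S (Suc k)"
  unfolding \<nu>_def by (rule pmf_tpmf[OF S_mono S0 S_lim])
lemma tail_nu: "measure_pmf.prob \<nu> {k..} = S k"
  unfolding \<nu>_def by (rule tail_tpmf[OF S_mono S0 S_lim])

lemma distr_K: "distr M (count_space UNIV) K = measure_pmf pK"
proof (rule measure_eqI_countable[where A=UNIV])
  fix a :: nat
  have "emeasure (distr M (count_space UNIV) K) {a} = emeasure M {\<omega>\<in>space M. K \<omega> = a}"
    by (subst emeasure_distr) (auto intro!: arg_cong2[where f=emeasure])
  also have "\<dots> = ennreal (T a - T (Suc a))"
    by (simp add: emeasure_eq_measure T_diff)
  finally show "emeasure (distr M (count_space UNIV) K) {a} = emeasure (measure_pmf pK) {a}"
    by (simp add: emeasure_pmf_single pmf_pK)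
qed auto

lemma Q_min: "measure_pmf.prob Q {q. min (fst q) (snd q) = k} = T k - T (Suc k)"
proof -
  have ge: "measure_pmf.prob Q {q. j \<le> min (fst q) (snd q)} = T j" for j
  proof -
    have "{q. j \<le> min (fst q) (snd q)} = {j..} \<times> {j..}" by auto
    then show ?thesis unfolding Q_def
      by (simp add: pair_pmf_rect tail_nu S_def T_nonneg)
  qed
  have "{q. min (fst q) (snd q) = k} = {q. k \<le> min (fst q) (snd q)} - {q. Suc k \<le> min (fst q) (snd q)}"
    by auto
  then have "measure_pmf.prob Q {q. min (fst q) (snd q) = k} = measure_pmf.prob Q {q. k \<le> min (fst q) (snd q)} - measure_pmf.prob Q {q. Suc k \<le> min (fst q) (snd q)}"
    by (metis (no_types, lifting) measure_pmf.finite_measure_Diff sets_measure_pmf UNIV_I subsetI mem_Collect_eq Suc_leD min_def)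
  then show ?thesis by (simp only: ge)
qed

definition \<kappa> :: "nat \<Rightarrow> (nat \<times> nat) pmf" where
  "\<kappa> k = cond_pmf Q {q. min (fst q) (snd q) = k}"

lemma bind_kappa: "bind_pmf pK \<kappa> = Q"
  unfolding \<kappa>_def
proof (rule bind_cond_pmf_cancel)
  fix x assume "x \<in> set_pmf pK"
  then have "0 < measure_pmf.prob Q {q. min (fst q) (snd q) = x}"
    by (simp add: Q_min pmf_pK[symmetric] pmf_positive)
  then show "set_pmf Q \<inter> {y. min (fst y) (snd y) = x} \<noteq> {}"
    using measure_pmf_zero_iff by (metis less_irrefl)
next
  fix y assume "y \<in> set_pmf Q"
  then have "0 < measure_pmf.prob Q {q. min (fst q) (snd q) = min (fst y) (snd y)}"
    by (intro measure_pmf_posI) auto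
  then have "min (fst y) (snd y) \<in> set_pmf pK"
    by (simp add: Q_min pmf_pK[symmetric] set_pmf_iff)
  then show "set_pmf pK \<inter> {x. min (fst y) (snd y) = x} \<noteq> {}" by auto
next
  fix x :: nat and y :: "nat \<times> nat" assume "min (fst y) (snd y) = x"
  then show "measure_pmf.prob Q {y. min (fst y) (snd y) = x} = measure_pmf.prob pK {x. min (fst y) (snd y) = x}"
    by (simp add: Q_min measure_pmf_single pmf_pK)
qed


lemma exp_K_bound:
  assumes c: "0 < c" "c \<le> cX" "c \<le> cY"
  shows "exp (c * real (K \<omega>)) \<le> exp c * (3 + exp (cX * X \<omega>) + exp (cY * Y \<omega>))"
proof -
  have "real (K \<omega>) \<le> max (max (X \<omega>) (Y \<omega>)) 0 + 1"
    unfolding K_def by linarith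
  then have "exp (c * real (K \<omega>)) \<le> exp (c * (max (max (X \<omega>) (Y \<omega>)) 0) + c)"
  proof -
    have "c * real (K \<omega>) \<le> c * (max (max (X \<omega>) (Y \<omega>)) 0 + 1)"
      using c \<open>real (K \<omega>) \<le> _\<close> by (intro mult_left_mono) auto
    then show ?thesis by (simp add: algebra_simps)
  qed
  also have "\<dots> = exp c * exp (c * max (max (X \<omega>) (Y \<omega>)) 0)"
    by (simp add: exp_add)
  also have "exp (c * max (max (X \<omega>) (Y \<omega>)) 0) \<le> 1 + exp (c * X \<omega>) + exp (c * Y \<omega>)"
    by (cases "X \<omega> \<le> Y \<omega>"; cases "0 \<le> max (X \<omega>) (Y \<omega>)") (auto simp: max_def)
  also have "exp (c * X \<omega>) \<le> 1 + exp (cX * X \<omega>)"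
  proof (cases "0 \<le> X \<omega>")
    case True then have "c * X \<omega> \<le> cX * X \<omega>" using c by (simp add: mult_right_mono)
    then show ?thesis by (smt (verit) exp_gt_zero exp_le_cancel_iff)
  next
    case False then have "c * X \<omega> \<le> 0" using c by (simp add: mult_nonneg_nonpos)
    then show ?thesis by (smt (verit) exp_gt_zero exp_le_one_iff)
  qed
  also have "exp (c * Y \<omega>) \<le> 1 + exp (cY * Y \<omega>)"
  proof (cases "0 \<le> Y \<omega>")
    case True then have "c * Y \<omega> \<le> cY * Y \<omega>" using c by (simp add: mult_right_mono)
    then show ?thesis by (smt (verit) exp_gt_zero exp_le_cancel_iff)
  next
    case False then have "c * Y \<omega> \<le> 0" using c by (simp add: mult_nonneg_nonpos)
    then show ?thesis by (smt (verit) exp_gt_zero exp_le_one_iff)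
  qed
  finally show ?thesis by (simp add: algebra_simps)
qed

lemma light_nu:
  assumes lX: "light_tailed (distr M borel X)" and lY: "light_tailed (distr M borel Y)"
  shows "light_tailed (distr (measure_pmf \<nu>) borel real)"
proof -
  obtain cX where cX: "cX > 0" "(\<integral>\<^sup>+ \<omega>. ennreal (exp (cX * X \<omega>)) \<partial>M) < \<infinity>"
    using lX unfolding light_tailed_def by (auto simp: nn_integral_distr)
  obtain cY where cY: "cY > 0" "(\<integral>\<^sup>+ \<omega>. ennreal (exp (cY * Y \<omega>)) \<partial>M) < \<infinity>"
    using lY unfolding light_tailed_def by (auto simp: nn_integral_distr)
  define c where "c = min cX cY"
  have c: "0 < c" "c \<le> cX" "c \<le> cY" using cX cY by (auto simp: c_def)
  define C where "C = (\<integral>\<^sup>+ \<omega>. ennreal (exp (c * real (K \<omega>))) \<partial>M)"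
  have "C \<le> (\<integral>\<^sup>+ \<omega>. ennreal (exp c) * (3 + ennreal (exp (cX * X \<omega>)) + ennreal (exp (cY * Y \<omega>))) \<partial>M)"
    unfolding C_def
  proof (intro nn_integral_mono)
    fix \<omega>
    have "ennreal (exp (c * real (K \<omega>))) \<le> ennreal (exp c * (3 + exp (cX * X \<omega>) + exp (cY * Y \<omega>)))"
      using exp_K_bound[OF c] ennreal_leI by blast
    then show "ennreal (exp (c * real (K \<omega>))) \<le> ennreal (exp c) * (3 + ennreal (exp (cX * X \<omega>)) + ennreal (exp (cY * Y \<omega>)))"
      by (simp add: ennreal_mult ennreal_plus)
  qed
  also have "\<dots> = ennreal (exp c) * (3 + (\<integral>\<^sup>+ \<omega>. ennreal (exp (cX * X \<omega>)) \<partial>M) + (\<integral>\<^sup>+ \<omega>. ennreal (exp (cY * Y \<omega>)) \<partial>M))"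
    by (simp add: nn_integral_cmult nn_integral_add emeasure_space_1)
  also have "\<dots> < \<infinity>" using cX cY by (simp add: ennreal_mult_less_top)
  finally have Cfin: "C < \<infinity>" .
  define C' where "C' = enn2real C"
  have CC': "C = ennreal C'" using Cfin by (simp add: C'_def)
  have C'0: "0 \<le> C'" by (simp add: C'_def)
  have Tb: "T k \<le> exp (- c * k) * C'" for k
  proof -
    have "emeasure M {\<omega>\<in>space M. k \<le> K \<omega>} = (\<integral>\<^sup>+ \<omega>. indicator {\<omega>\<in>space M. k \<le> K \<omega>} \<omega> \<partial>M)"
      by simp
    also have "\<dots> \<le> (\<integral>\<^sup>+ \<omega>. ennreal (exp (- c * k)) * ennreal (exp (c * real (K \<omega>))) \<partial>M)"
    proof (intro nn_integral_mono)
      fix \<omega> assume "\<omega> \<in> space M"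
      show "indicator {\<omega>\<in>space M. k \<le> K \<omega>} \<omega> \<le> ennreal (exp (- c * k)) * ennreal (exp (c * real (K \<omega>)))"
      proof (cases "k \<le> K \<omega>")
        case True
        then have "1 \<le> exp (- c * k) * exp (c * real (K \<omega>))"
          using c by (simp add: mult_left_mono flip: exp_add)
        then show ?thesis using True \<open>\<omega> \<in> space M\<close>
          by (simp add: ennreal_mult[symmetric] ennreal_leI flip: ennreal_1)
      qed simp
    qed
    also have "\<dots> = ennreal (exp (- c * k)) * C"
      unfolding C_def by (simp add: nn_integral_cmult)
    finally have "ennreal (T k) \<le> ennreal (exp (- c * k) * C')"
      by (simp add: CC' T_def emeasure_eq_measure ennreal_mult C'0)
    then show ?thesis using C'0 by (simp add: ennreal_le_iff2) (smt (verit) exp_gt_zero mult_nonneg_nonneg)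
  qed
  define r where "r = exp (- c / 4)"
  have r: "0 \<le> r" "r < 1" using c by (auto simp: r_def)
  have term_b: "pmf \<nu> k * exp (c / 4 * real k) \<le> sqrt C' * r ^ k" for k
  proof -
    have "pmf \<nu> k \<le> S k" using pmf_nu[of k] by (simp add: S_def real_sqrt_ge_zero T_nonneg)
    also have "S k \<le> sqrt (exp (- c * k) * C')" unfolding S_def using Tb by simp
    also have "\<dots> = exp (- c * k / 2) * sqrt C'"
      by (simp add: real_sqrt_mult sqrt_exp)
    finally have "pmf \<nu> k * exp (c / 4 * real k) \<le> exp (- c * k / 2) * sqrt C' * exp (c / 4 * real k)"
      by (simp add: mult_right_mono)
    also have "\<dots> = sqrt C' * exp (- c / 4 * k)"
      by (simp add: algebra_simps flip: exp_add)
    also have "exp (- c / 4 * k) = r ^ k" unfolding r_def by (simp add: exp_of_nat_mult[symmetric] mult.commute)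
    finally show ?thesis .
  qed
  have "(\<integral>\<^sup>+ x. ennreal (exp (c / 4 * x)) \<partial>distr (measure_pmf \<nu>) borel real)
        = (\<integral>\<^sup>+ k. ennreal (exp (c / 4 * real k)) \<partial>measure_pmf \<nu>)"
    by (simp add: nn_integral_distr)
  also have "\<dots> = (\<Sum>k. ennreal (pmf \<nu> k * exp (c / 4 * real k)))"
    by (simp add: nn_integral_measure_pmf nn_integral_count_space_nat ennreal_mult)
  also have "\<dots> \<le> (\<Sum>k. ennreal (sqrt C' * r ^ k))"
    by (intro suminf_le summableI ennreal_leI term_b)
  also have "\<dots> = ennreal (sqrt C' * (1 / (1 - r)))"
    using r by (intro suminf_ennreal_eq sums_mult geometric_sums) (auto simp: C'0)
  also have "\<dots> < \<infinity>" by simp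
  finally show ?thesis unfolding light_tailed_def using c
    by (intro exI[of _ "c/4"]) auto
qed


definition R :: "nat \<times> nat \<Rightarrow> real \<times> real" where "R q = (real (fst q), real (snd q))"

lemma R_meas[measurable]: "R \<in> count_space UNIV \<rightarrow>\<^sub>M borel" by simp

lemma Q_prod: "distr (measure_pmf Q) borel R =
   distr (measure_pmf \<nu>) borel real \<Otimes>\<^sub>M distr (measure_pmf \<nu>) borel real"
proof (rule pair_measure_eqI[symmetric])
  let ?\<mu> = "distr (measure_pmf \<nu>) borel real"
  interpret mu: prob_space ?\<mu> by (rule measure_pmf.prob_space_distr) simp
  show "sigma_finite_measure ?\<mu>" by unfold_locales
  show "sigma_finite_measure ?\<mu>" by unfold_locales
  show "sets (?\<mu> \<Otimes>\<^sub>M ?\<mu>) = sets (distr (measure_pmf Q) borel R)"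
    using sets_pair_measure_cong[of "distr (measure_pmf \<nu>) borel real" borel "distr (measure_pmf \<nu>) borel real" borel] by (simp del: sets_pair_measure_cong) (simp only: borel_prod)
  fix A B :: "real set" assume A: "A \<in> sets ?\<mu>" and B: "B \<in> sets ?\<mu>"
  have "emeasure (distr (measure_pmf Q) borel R) (A \<times> B) = emeasure (measure_pmf Q) (R -` (A \<times> B))"
  proof -
    have "A \<times> B \<in> sets (borel \<Otimes>\<^sub>M (borel :: real measure))" using A B by (intro pair_measureI) auto
    then have "A \<times> B \<in> sets (borel :: (real \<times> real) measure)" by (simp only: borel_prod)
    then show ?thesis by (subst emeasure_distr) auto
  qed
  also have "R -` (A \<times> B) = (real -` A) \<times> (real -` B)" by (auto simp: R_def)
  also have "emeasure (measure_pmf Q) ((real -` A) \<times> (real -` B)) =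
     ennreal (measure_pmf.prob \<nu> (real -` A)) * ennreal (measure_pmf.prob \<nu> (real -` B))"
    by (simp add: measure_pmf.emeasure_eq_measure Q_def pair_pmf_rect ennreal_mult)
  also have "\<dots> = emeasure ?\<mu> A * emeasure ?\<mu> B"
    using A B by (simp add: emeasure_distr measure_pmf.emeasure_eq_measure)
  finally show "emeasure ?\<mu> A * emeasure ?\<mu> B = emeasure (distr (measure_pmf Q) borel R) (A \<times> B)" ..
qed

definition G :: "'a \<Rightarrow> ((real \<times> real) \<times> (real \<times> real)) measure" where
  "G \<omega> = distr (measure_pmf (\<kappa> (K \<omega>))) borel (\<lambda>q. ((X \<omega>, Y \<omega>), R q))"

lemma kappa_meas: "(\<lambda>\<omega>. measure_pmf (\<kappa> (K \<omega>))) \<in> M \<rightarrow>\<^sub>M prob_algebra (count_space UNIV)"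
proof (rule measurable_compose[OF K_meas])
  show "(\<lambda>k. measure_pmf (\<kappa> k)) \<in> count_space UNIV \<rightarrow>\<^sub>M prob_algebra (count_space UNIV)"
    by (auto simp: space_prob_algebra measure_pmf.prob_space_axioms)
qed

lemma G_meas: "G \<in> M \<rightarrow>\<^sub>M prob_algebra borel"
  unfolding G_def
  by (rule measurable_distr_prob_space2[OF kappa_meas]) measurable


lemma fst_borel[measurable]: "fst \<in> (borel :: ('b::second_countable_topology \<times> 'c::second_countable_topology) measure) \<rightarrow>\<^sub>M borel"
  by (metis borel_prod measurable_fst)
lemma snd_borel[measurable]: "snd \<in> (borel :: ('b::second_countable_topology \<times> 'c::second_countable_topology) measure) \<rightarrow>\<^sub>M borel"
  by (metis borel_prod measurable_snd)

definition N where "N = M \<bind> G"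

lemma N_prob: "prob_space N"
  unfolding N_def by (rule prob_space_bind'[OF _ G_meas]) (auto simp: space_prob_algebra prob_space_axioms)

lemma N_sets: "sets N = sets borel"
  unfolding N_def by (rule sets_bind'[OF _ G_meas]) (auto simp: space_prob_algebra prob_space_axioms)

lemma N_fst: "distr N borel fst = distr M borel (\<lambda>\<omega>. (X \<omega>, Y \<omega>))"
proof -
  have "distr N borel fst = M \<bind> (\<lambda>\<omega>. distr (G \<omega>) borel fst)"
    unfolding N_def by (rule distr_bind[OF measurable_prob_algebraD[OF G_meas]]) (auto simp: not_empty)
  also have "\<dots> = M \<bind> (\<lambda>\<omega>. return borel (X \<omega>, Y \<omega>))"
  proof (rule bind_cong[OF refl])
    fix \<omega> assume "\<omega> \<in> space M"
    have "distr (G \<omega>) borel fst = distr (measure_pmf (\<kappa> (K \<omega>))) borel (\<lambda>q. (X \<omega>, Y \<omega>))"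
      unfolding G_def by (subst distr_distr) (auto simp: comp_def)
    also have "\<dots> = return borel (X \<omega>, Y \<omega>)" by simp
    finally show "distr (G \<omega>) borel fst = return borel (X \<omega>, Y \<omega>)" .
  qed
  also have "\<dots> = distr M borel (\<lambda>\<omega>. (X \<omega>, Y \<omega>))"
    by (rule bind_return_distr') (auto simp: not_empty)
  finally show ?thesis .
qed

lemma kern_meas: "(\<lambda>k. distr (measure_pmf (\<kappa> k)) borel R) \<in> count_space UNIV \<rightarrow>\<^sub>M subprob_algebra borel"
  by (auto simp: space_subprob_algebra intro!: prob_space_imp_subprob_space measure_pmf.prob_space_distr)

lemma N_snd: "distr N borel snd = distr (measure_pmf Q) borel R"
proof -
  have "distr N borel snd = M \<bind> (\<lambda>\<omega>. distr (G \<omega>) borel snd)"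
    unfolding N_def by (rule distr_bind[OF measurable_prob_algebraD[OF G_meas]]) (auto simp: not_empty)
  also have "\<dots> = M \<bind> (\<lambda>\<omega>. distr (measure_pmf (\<kappa> (K \<omega>))) borel R)"
    by (intro bind_cong[OF refl]) (auto simp: G_def distr_distr comp_def)
  also have "\<dots> = distr M (count_space UNIV) K \<bind> (\<lambda>k. distr (measure_pmf (\<kappa> k)) borel R)"
    by (rule bind_distr[symmetric, OF K_meas kern_meas]) (auto simp: not_empty)
  also have "\<dots> = measure_pmf pK \<bind> (\<lambda>k. distr (measure_pmf (\<kappa> k)) borel R)"
    by (simp add: distr_K)
  also have "\<dots> = distr (measure_pmf pK \<bind> (\<lambda>k. measure_pmf (\<kappa> k))) borel R"
    by (rule distr_bind[symmetric, where K="count_space UNIV"]) (auto simp: R_meas space_subprob_algebra intro: prob_space_imp_subprob_space measure_pmf.prob_space_axioms)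
  also have "\<dots> = distr (measure_pmf Q) borel R"
    by (simp add: measure_pmf_bind[symmetric] bind_kappa)
  finally show ?thesis .
qed

lemma supp_nonempty: "x \<in> set_pmf pK \<Longrightarrow> set_pmf Q \<inter> {y. min (fst y) (snd y) = x} \<noteq> {}"
proof -
  assume "x \<in> set_pmf pK"
  then have "0 < measure_pmf.prob Q {q. min (fst q) (snd q) = x}"
    by (simp add: Q_min pmf_pK[symmetric] pmf_positive)
  then show "set_pmf Q \<inter> {y. min (fst y) (snd y) = x} \<noteq> {}"
    using measure_pmf_zero_iff by (metis less_irrefl)
qed

lemma N_AE: "AE z in N. max (fst (fst z)) (snd (fst z)) \<le> min (fst (snd z)) (snd (snd z))"
  unfolding N_def
proof (subst AE_bind[OF measurable_prob_algebraD[OF G_meas]])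
  show "Measurable.pred borel (\<lambda>z::(real \<times> real) \<times> (real \<times> real). max (fst (fst z)) (snd (fst z)) \<le> min (fst (snd z)) (snd (snd z)))"
    by measurable
  have "AE k in measure_pmf pK. k \<in> set_pmf pK" by (rule AE_measure_pmf)
  then have "AE \<omega> in M. K \<omega> \<in> set_pmf pK"
    using AE_distr_iff[of K M "count_space UNIV" "\<lambda>k. k \<in> set_pmf pK"] distr_K by (metis (no_types) K_meas sets_count_space UNIV_I Pow_UNIV)
  then show "AE \<omega> in M. AE z in G \<omega>. max (fst (fst z)) (snd (fst z)) \<le> min (fst (snd z)) (snd (snd z))"
  proof eventually_elim
    case (elim \<omega>)
    have ne: "set_pmf Q \<inter> {y. min (fst y) (snd y) = K \<omega>} \<noteq> {}" by (rule supp_nonempty[OF elim])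
    have W: "max (X \<omega>) (Y \<omega>) \<le> real (K \<omega>)" unfolding K_def by linarith
    show ?case unfolding G_def
    proof (subst AE_distr_iff)
      show "AE q in measure_pmf (\<kappa> (K \<omega>)). max (fst (fst ((X \<omega>, Y \<omega>), R q))) (snd (fst ((X \<omega>, Y \<omega>), R q)))
             \<le> min (fst (snd ((X \<omega>, Y \<omega>), R q))) (snd (snd ((X \<omega>, Y \<omega>), R q)))"
      proof (subst AE_measure_pmf_iff, intro ballI)
        fix q assume "q \<in> set_pmf (\<kappa> (K \<omega>))"
        then have "min (fst q) (snd q) = K \<omega>" unfolding \<kappa>_def using ne by simp
        then show "max (fst (fst ((X \<omega>, Y \<omega>), R q))) (snd (fst ((X \<omega>, Y \<omega>), R q)))
             \<le> min (fst (snd ((X \<omega>, Y \<omega>), R q))) (snd (snd ((X \<omega>, Y \<omega>), R q)))"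
          using W by (auto simp: R_def)
      qed
    qed auto
  qed
qed

end
theorem mainTheorem12:
  fixes M :: "'a measure" and X Y :: "'a \<Rightarrow> real"
  assumes "prob_space M"
    and "X \<in> borel_measurable M" and "Y \<in> borel_measurable M"
    and "light_tailed (distr M borel X)" and "light_tailed (distr M borel Y)"
  shows "\<exists>N :: ((real \<times> real) \<times> (real \<times> real)) measure.
           prob_space N \<and> sets N = sets borel \<and>
           distr N borel fst = distr M borel (\<lambda>\<omega>. (X \<omega>, Y \<omega>)) \<and>
           (\<exists>\<mu> :: real measure. prob_space \<mu> \<and> sets \<mu> = sets borel \<and> light_tailed \<mu> \<and>
              distr N borel snd = \<mu> \<Otimes>\<^sub>M \<mu>) \<and>
           (AE z in N. max (fst (fst z)) (snd (fst z)) \<le> min (fst (snd z)) (snd (snd z)))"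
proof -
  interpret cpl M X Y using assms by (simp add: cpl_def cpl_axioms_def)
  let ?\<mu> = "distr (measure_pmf \<nu>) borel real"
  show ?thesis
  proof (intro exI conjI)
    show "prob_space N" by (rule N_prob)
    show "sets N = sets borel" by (rule N_sets)
    show "distr N borel fst = distr M borel (\<lambda>\<omega>. (X \<omega>, Y \<omega>))" by (rule N_fst)
    show "prob_space ?\<mu>" by (rule measure_pmf.prob_space_distr) simp
    show "sets ?\<mu> = sets borel" by simp
    show "light_tailed ?\<mu>" by (rule light_nu[OF assms(4,5)])
    show "distr N borel snd = ?\<mu> \<Otimes>\<^sub>M ?\<mu>" by (simp add: N_snd Q_prod)
    show "AE z in N. max (fst (fst z)) (snd (fst z)) \<le> min (fst (snd z)) (snd (snd z))" by (rule N_AE)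
  qed
qed

end
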